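(* Let $H$ be a complex Hilbert space, $A,B\in\mathbb{B}(H)$, $t\in[0,1]$, and let $\varphi,\psi,\varphi_1,\varphi_2,\psi_1,\psi_2:[0,1]\to\mathbb{R}$ be continuous. Then: (1) $\omega_t(0,\psi;A)=|\psi(t)|\,\omega(A)$ and $c_t(0,\psi;A)=|\psi(t)|\,c(A)$; (2) $\omega_t(\varphi,0;A)=|\varphi(t)|\,\omega(A)$ and $c_t(\varphi,0;A)=|\varphi(t)|\,c(A)$; (3) $\omega_t(1,1;A)=2\|\operatorname{Re}A\|$ and $c_t(1,1;A)=2c(\operatorname{Re}A)$; (4) $\omega_t(1,-1;A)=2\|\operatorname{Im}A\|$ and $c_t(1,-1;A)=2c(\operatorname{Im}A)$; (5) $\omega_t(\varphi,\psi;iA)=\omega_t(\varphi,-\psi;A)$; (6) $\frac12\|A\|_t\le\omega_t(\varphi,\psi;A)\le\|A\|_t$; (7) $\omega_t(\varphi,\psi;A)\le(|\varphi(t)|+|\psi(t)|)\,\omega(A)$ and $c_t(\varphi,\psi;A)\ge\big||\varphi(t)|-|\psi(t)|\big|\,c(A)$; (8) $\omega_t(\varphi,\varphi;A)=2|\varphi(t)|\,\omega(\operatorname{Re}A)=2|\varphi(t)|\,\|\operatorname{Re}A\|$; (9) $\omega_t(\psi,\psi;A)=2|\psi(t)|\,\omega(\operatorname{Re}A)=2|\psi(t)|\,\|\operatorname{Re}A\|$; (10) if $A=A^*$, then $\omega_t(\varphi,\psi;A)=|\varphi(t)+\psi(t)|\,\omega(A)=|\varphi(t)+\psi(t)|\,\|A\|$;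 (11) $\omega_t(\varphi,\psi;A)=\omega_t(\psi,\varphi;A^* )$; (12) if $A=A^*$, then $\omega_t(\varphi,\psi;A)=\omega_t(\psi,\varphi;A)$; (13) $\omega_t(\varphi,\psi;A+B)\le\omega_t(\varphi,\psi;A)+\omega_t(\varphi,\psi;B)$; (14) $c_t(\varphi,\psi;A+B)\le\omega_t(\varphi,\psi;A)+c_t(\varphi,\psi;B)$; (15) $\omega_t(\varphi,\psi;AB)\le(|\varphi(t)|+|\psi(t)|)\,\omega(AB)$; (16) $c_t(\varphi,\psi;AB)\le|\varphi(t)|\,c(AB)+|\psi(t)|\,\omega(AB)$; (17) $\|\varphi(t)AB+\psi(t)(AB)^*\|^2\le(|\varphi(t)|^2+|\psi(t)|^2)\|AB\|^2+|\varphi(t)\psi(t)|\,\omega((AB)^2)+|\varphi(t)\psi(t)|\,\omega((B^*A^* )^2)$; (18) $\omega_t(\varphi_1+\varphi_2,\psi_1+\psi_2;A)\le\omega_t(\varphi_1,\psi_1;A)+\omega_t(\varphi_2,\psi_2;A)$; (19) $c_t(\varphi,\psi;A)\ge\min\{|\varphi(t)+\psi(t)|,|\varphi(t)-\psi(t)|\}\,m(A)$, where $m(A)=\inf_{x\in S_1(H)}|\langle Ax,x\rangle|$.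
   Context: $\mathbb{B}(H)$ is the algebra of bounded linear operators on $H$, $S_1(H)=\{x\in H:\|x\|=1\}$. For $A\in\mathbb{B}(H)$: $\omega(A)=\sup_{x\in S_1(H)}|\langle Ax,x\rangle|$ (numerical radius), $c(A)=\inf_{x\in S_1(H)}|\langle Ax,x\rangle|$ (Crawford number), $\operatorname{Re}A=(A+A^* )/2$, $\operatorname{Im}A=(A-A^* )/(2i)$. For real-valued functions $\varphi,\psi$ on $[0,1]$ and $t\in[0,1]$: the weighted numerical radius $\omega_t(\varphi,\psi;A)=\sup_{x\in S_1(H)}|\langle(\varphi(t)A+\psi(t)A^* )x,x\rangle|$, the weighted Crawford number $c_t(\varphi,\psi;A)=\inf_{x\in S_1(H)}|\langle(\varphi(t)A+\psi(t)A^* )x,x\rangle|$, and the weighted norm $\|A\|_t=\|\varphi(t)A+\psi(t)A^*\|$. Numbers such as $0,1,-1$ in the weight slots denote constant functions. *)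

theory Defs
  imports "HOL-Analysis.Analysis"
begin

class chilbert = banach +
  fixes scaleC :: "complex \<Rightarrow> 'a \<Rightarrow> 'a" (infixr "*\<^sub>C" 75)
    and cinner :: "'a \<Rightarrow> 'a \<Rightarrow> complex"
  assumes scaleC_add_right: "a *\<^sub>C (x + y) = a *\<^sub>C x + a *\<^sub>C y"
    and scaleC_add_left: "(a + b) *\<^sub>C x = a *\<^sub>C x + b *\<^sub>C x"
    and scaleC_scaleC: "a *\<^sub>C (b *\<^sub>C x) = (a * b) *\<^sub>C x"
    and scaleC_one: "1 *\<^sub>C x = x"
    and scaleR_scaleC: "scaleR r x = complex_of_real r *\<^sub>C x"
    and cinner_add_left: "cinner (x + y) z = cinner x z + cinner y z"
    and cinner_scaleC_left: "cinner (a *\<^sub>C x) y = a * cinner x y"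
    and cinner_commute: "cinner y x = cnj (cinner x y)"
    and cinner_nonneg: "0 \<le> Re (cinner x x)"
    and cinner_eq_zero_iff: "cinner x x = 0 \<longleftrightarrow> x = 0"
    and norm_eq_sqrt_cinner: "norm x = sqrt (Re (cinner x x))"

definition clinear :: "('a::chilbert \<Rightarrow> 'a) \<Rightarrow> bool" where
  "clinear A \<longleftrightarrow> (\<forall>x y. A (x + y) = A x + A y) \<and> (\<forall>c x. A (c *\<^sub>C x) = c *\<^sub>C A x)"

definition bounded_clinear :: "('a::chilbert \<Rightarrow> 'a) \<Rightarrow> bool" where
  "bounded_clinear A \<longleftrightarrow> clinear A \<and> (\<exists>K. \<forall>x. norm (A x) \<le> norm x * K)"

definition adj :: "('a::chilbert \<Rightarrow> 'a) \<Rightarrow> ('a \<Rightarrow> 'a)" where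
  "adj A = (THE B. \<forall>x y. cinner (A x) y = cinner x (B y))"

definition unit_sphere :: "'a::chilbert set" where
  "unit_sphere = {x. norm x = 1}"

definition numrad :: "('a::chilbert \<Rightarrow> 'a) \<Rightarrow> real" where
  "numrad A = (SUP x\<in>unit_sphere. cmod (cinner (A x) x))"

definition crawford :: "('a::chilbert \<Rightarrow> 'a) \<Rightarrow> real" where
  "crawford A = (INF x\<in>unit_sphere. cmod (cinner (A x) x))"

definition op_add :: "('a::chilbert \<Rightarrow> 'a) \<Rightarrow> ('a \<Rightarrow> 'a) \<Rightarrow> ('a \<Rightarrow> 'a)" where
  "op_add A B = (\<lambda>x. A x + B x)"

definition op_scale :: "complex \<Rightarrow> ('a::chilbert \<Rightarrow> 'a) \<Rightarrow> ('a \<Rightarrow> 'a)" where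
  "op_scale c A = (\<lambda>x. c *\<^sub>C A x)"

definition ReOp :: "('a::chilbert \<Rightarrow> 'a) \<Rightarrow> ('a \<Rightarrow> 'a)" where
  "ReOp A = op_scale (1/2) (op_add A (adj A))"

definition ImOp :: "('a::chilbert \<Rightarrow> 'a) \<Rightarrow> ('a \<Rightarrow> 'a)" where
  "ImOp A = op_scale (1/(2*\<i>)) (op_add A (op_scale (-1) (adj A)))"

definition wop :: "(real \<Rightarrow> real) \<Rightarrow> (real \<Rightarrow> real) \<Rightarrow> real \<Rightarrow> ('a::chilbert \<Rightarrow> 'a) \<Rightarrow> ('a \<Rightarrow> 'a)" where
  "wop \<phi> \<psi> t A = op_add (op_scale (complex_of_real (\<phi> t)) A) (op_scale (complex_of_real (\<psi> t)) (adj A))"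

definition wnumrad :: "(real \<Rightarrow> real) \<Rightarrow> (real \<Rightarrow> real) \<Rightarrow> real \<Rightarrow> ('a::chilbert \<Rightarrow> 'a) \<Rightarrow> real" where
  "wnumrad \<phi> \<psi> t A = numrad (wop \<phi> \<psi> t A)"

definition wcrawford :: "(real \<Rightarrow> real) \<Rightarrow> (real \<Rightarrow> real) \<Rightarrow> real \<Rightarrow> ('a::chilbert \<Rightarrow> 'a) \<Rightarrow> real" where
  "wcrawford \<phi> \<psi> t A = crawford (wop \<phi> \<psi> t A)"

definition wnorm :: "(real \<Rightarrow> real) \<Rightarrow> (real \<Rightarrow> real) \<Rightarrow> real \<Rightarrow> ('a::chilbert \<Rightarrow> 'a) \<Rightarrow> real" where
  "wnorm \<phi> \<psi> t A = onorm (wop \<phi> \<psi> t A)"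

end

theory Submission
  imports Defs
begin

lemma ch_scaleC_zero_left[simp]: "(0::complex) *\<^sub>C (x::'a::chilbert) = 0"
  by (metis of_real_0 scaleR_scaleC scaleR_zero_left)

lemma ch_scaleC_real: "complex_of_real r *\<^sub>C (x::'a::chilbert) = r *\<^sub>R x"
  by (simp add: scaleR_scaleC)

lemma ch_scaleC_zero_right[simp]: "a *\<^sub>C (0::'a::chilbert) = 0"
proof -
  have "a *\<^sub>C (0::'a) = a *\<^sub>C 0 + a *\<^sub>C 0" by (metis add_0 scaleC_add_right)
  then show ?thesis by simp
qed

lemma ch_scaleC_minus_left: "(- a) *\<^sub>C (x::'a::chilbert) = - (a *\<^sub>C x)"
proof -
  have "a *\<^sub>C x + (- a) *\<^sub>C x = 0" by (metis add.right_inverse ch_scaleC_zero_left scaleC_add_left)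
  then show ?thesis by (simp add: eq_neg_iff_add_eq_0 add.commute)
qed

lemma ch_scaleC_minus_right: "a *\<^sub>C (- x::'a::chilbert) = - (a *\<^sub>C x)"
proof -
  have "a *\<^sub>C x + a *\<^sub>C (- x) = 0" by (metis add.right_inverse ch_scaleC_zero_right scaleC_add_right)
  then show ?thesis by (simp add: eq_neg_iff_add_eq_0 add.commute)
qed

lemma ch_scaleC_diff_right: "a *\<^sub>C (x - y::'a::chilbert) = a *\<^sub>C x - a *\<^sub>C y"
  by (metis diff_conv_add_uminus scaleC_add_right ch_scaleC_minus_right)

lemma ch_scaleC_diff_left: "(a - b) *\<^sub>C (x::'a::chilbert) = a *\<^sub>C x - b *\<^sub>C x"
  by (metis diff_conv_add_uminus scaleC_add_left ch_scaleC_minus_left)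

lemma ch_scaleC_m1[simp]: "(-1) *\<^sub>C (x::'a::chilbert) = - x"
  by (simp add: ch_scaleC_minus_left scaleC_one)

lemma ch_cinner_add_right: "cinner x (y + z) = cinner x y + cinner (x::'a::chilbert) z"
  by (metis cinner_add_left cinner_commute complex_cnj_add)

lemma ch_cinner_scaleC_right: "cinner x (a *\<^sub>C y) = cnj a * cinner (x::'a::chilbert) y"
  by (metis cinner_scaleC_left cinner_commute complex_cnj_mult)

lemma ch_cinner_zero_left[simp]: "cinner 0 (y::'a::chilbert) = 0"
  by (metis cinner_scaleC_left ch_scaleC_zero_left mult_zero_left)

lemma ch_cinner_zero_right[simp]: "cinner (y::'a::chilbert) 0 = 0"
  by (metis cinner_commute ch_cinner_zero_left complex_cnj_zero)

lemma ch_cinner_minus_left: "cinner (- x) (y::'a::chilbert) = - cinner x y"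
  by (metis ch_scaleC_m1 cinner_scaleC_left mult_minus1)

lemma ch_cinner_minus_right: "cinner y (- x::'a::chilbert) = - cinner y x"
  by (metis cinner_commute ch_cinner_minus_left complex_cnj_minus)

lemma ch_cinner_diff_left: "cinner (x - y) (z::'a::chilbert) = cinner x z - cinner y z"
  by (simp only: diff_conv_add_uminus cinner_add_left ch_cinner_minus_left)

lemma ch_cinner_diff_right: "cinner z (x - y::'a::chilbert) = cinner z x - cinner z y"
  by (simp only: diff_conv_add_uminus ch_cinner_add_right ch_cinner_minus_right)

lemma ch_cinner_self_Im: "Im (cinner x (x::'a::chilbert)) = 0"
proof -
  have "cinner x x = cnj (cinner x x)" by (rule cinner_commute)
  then have "Im (cinner x x) = Im (cnj (cinner x x))" by simp
  then show ?thesis by simp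
qed

lemma ch_cinner_self: "cinner x (x::'a::chilbert) = complex_of_real ((norm x)\<^sup>2)"
  using ch_cinner_self_Im[of x] cinner_nonneg[of x]
  by (simp add: norm_eq_sqrt_cinner complex_eq_iff)

lemma ch_norm_sq: "(norm x)\<^sup>2 = Re (cinner x (x::'a::chilbert))"
  by (simp add: ch_cinner_self)

lemmas ch_simps = cinner_add_left ch_cinner_add_right cinner_scaleC_left ch_cinner_scaleC_right
  ch_cinner_diff_left ch_cinner_diff_right ch_cinner_minus_left ch_cinner_minus_right

lemma cmod_sq_expand: "cmod a * cmod a = Re a * Re a + Im a * Im a"
  by (metis cmod_power2 power2_eq_square)

lemma ch_norm_scaleC: "norm (a *\<^sub>C x) = cmod a * norm (x::'a::chilbert)"
proof -
  have "(norm (a *\<^sub>C x))\<^sup>2 = (cmod a * norm x)\<^sup>2"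
    unfolding ch_norm_sq ch_simps
    by (simp add: power_mult_distrib ch_norm_sq[symmetric] complex_norm_square[symmetric] mult.assoc[symmetric] cmod_power2 power2_eq_square cmod_sq_expand)
  then show ?thesis by (simp add: power2_eq_iff_nonneg)
qed

lemma ch_CS: "cmod (cinner x y) \<le> norm x * norm (y::'a::chilbert)"
proof (cases "y = 0")
  case True then show ?thesis by simp
next
  case False
  define n where "n = (norm y)\<^sup>2"
  define c where "c = cinner x y"
  have n: "n > 0" using False by (simp add: n_def)
  have "0 \<le> Re (cinner (of_real n *\<^sub>C x - c *\<^sub>C y) (of_real n *\<^sub>C x - c *\<^sub>C y))"
    by (rule cinner_nonneg)
  also have "cinner (of_real n *\<^sub>C x - c *\<^sub>C y) (of_real n *\<^sub>C x - c *\<^sub>C y)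
     = of_real n * of_real n * cinner x x - of_real n * cnj c * c - c * of_real n * cinner y x + c * cnj c * of_real n"
    unfolding ch_simps by (simp add: c_def n_def ch_cinner_self algebra_simps)
  also have "cinner y x = cnj c" by (simp add: c_def cinner_commute[of y x])
  finally have "0 \<le> n * (n * (norm x)\<^sup>2 - (cmod c)\<^sup>2)"
    by (simp add: ch_cinner_self cmod_power2 algebra_simps power2_eq_square cmod_sq_expand)
  then have "(cmod c)\<^sup>2 \<le> (norm x * norm y)\<^sup>2" using n
    by (simp add: zero_le_mult_iff n_def power_mult_distrib mult.commute)
  then show ?thesis unfolding c_def by (simp add: power2_le_iff_abs_le)
qed

lemma ch_cinner_ext: "(\<And>x. cinner x a = cinner x b) \<Longrightarrow> a = (b::'a::chilbert)"
proof -
  assume h: "\<And>x. cinner x a = cinner x b"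
  have "cinner (a - b) (a - b) = 0" by (simp add: ch_cinner_diff_right h)
  then show ?thesis by (simp add: cinner_eq_zero_iff)
qed

lemma ch_parallelogram:
  "(norm (x - y))\<^sup>2 = 2 * (norm x)\<^sup>2 + 2 * (norm y)\<^sup>2 - (norm (x + (y::'a::chilbert)))\<^sup>2"
  unfolding ch_norm_sq ch_simps by simp

lemma ch_min_orth:
  fixes u w :: "'a::chilbert"
  assumes h: "\<And>s. (norm u)\<^sup>2 \<le> (norm (u + s *\<^sub>C w))\<^sup>2"
  shows "cinner w u = 0"
proof -
  define c where "c = cinner w u"
  define e where "e = 1 / ((norm w)\<^sup>2 + 1)"
  have wp: "(norm w)\<^sup>2 + 1 > 0" by (simp add: add_nonneg_pos)
  have e: "e > 0" using wp by (simp add: e_def)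
  have ew: "e * (norm w)\<^sup>2 < 1" unfolding e_def using wp by (simp add: field_simps)
  define s where "s = - complex_of_real e * cnj c"
  have "(norm (u + s *\<^sub>C w))\<^sup>2 = (norm u)\<^sup>2 + 2 * Re (s * c) + (cmod s)\<^sup>2 * (norm w)\<^sup>2"
  proof -
    have "cinner u w = cnj c" by (simp add: c_def cinner_commute[of u w])
    then show ?thesis unfolding ch_norm_sq ch_simps
      by (simp add: c_def ch_norm_sq[symmetric] cmod_power2 power2_eq_square algebra_simps cmod_sq_expand)
  qed
  also have "Re (s * c) = - e * (cmod c)\<^sup>2" by (simp add: s_def cmod_power2 power2_eq_square algebra_simps cmod_sq_expand)
  also have "(cmod s)\<^sup>2 = e * e * (cmod c)\<^sup>2" by (simp add: s_def norm_mult power_mult_distrib power2_eq_square)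
  finally have "(norm u)\<^sup>2 \<le> (norm u)\<^sup>2 + 2 * (- e * (cmod c)\<^sup>2) + e * e * (cmod c)\<^sup>2 * (norm w)\<^sup>2"
    using h[of s] by simp
  then have "0 \<le> e * ((cmod c)\<^sup>2 * (e * (norm w)\<^sup>2 - 2))" by (simp add: algebra_simps)
  then have "0 \<le> (cmod c)\<^sup>2 * (e * (norm w)\<^sup>2 - 2)" using e by (simp add: zero_le_mult_iff)
  moreover have "e * (norm w)\<^sup>2 - 2 < 0" using ew by simp
  ultimately have "(cmod c)\<^sup>2 \<le> 0" by (simp add: mult_le_0_iff zero_le_mult_iff)
  then show ?thesis unfolding c_def by simp
qed

lemma ch_riesz:
  fixes f :: "'a::chilbert \<Rightarrow> complex"
  assumes add: "\<And>x y. f (x + y) = f x + f y" and sc: "\<And>c x. f (c *\<^sub>C x) = c * f x"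
    and bd: "\<And>x. cmod (f x) \<le> K * norm x"
  shows "\<exists>z. \<forall>x. f x = cinner x z"
proof (cases "\<forall>x. f x = 0")
  case True then show ?thesis by (intro exI[of _ 0]) simp
next
  case False
  then obtain x0 where x0: "f x0 \<noteq> 0" by auto
  have f0: "f 0 = 0" using sc[of 0 0] by simp
  have fdiff: "f (x - y) = f x - f y" for x y
    using add[of "x - y" y] by simp
  define M where "M = {x. f x = 1}"
  have u0: "(1 / f x0) *\<^sub>C x0 \<in> M" using x0 by (simp add: M_def sc)
  define d where "d = Inf (norm ` M)"
  have bddM: "bdd_below (norm ` M)" by (rule bdd_belowI[of _ 0]) auto
  have dle: "d \<le> norm v" if "v \<in> M" for v
    unfolding d_def using bddM that by (simp add: cInf_lower)
  have d0: "0 \<le> d" unfolding d_def using u0 by (auto intro!: cInf_greatest)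
  have "\<exists>v\<in>M. (norm v)\<^sup>2 < d\<^sup>2 + 1 / real (Suc n)" for n
  proof -
    have lt: "d < sqrt (d\<^sup>2 + 1 / real (Suc n))"
      using d0 by (simp add: real_less_rsqrt)
    then have "Inf (norm ` M) < sqrt (d\<^sup>2 + 1 / real (Suc n))" by (simp add: d_def)
    then obtain v where "v \<in> M" "norm v < sqrt (d\<^sup>2 + 1 / real (Suc n))"
    proof -
      have "norm ` M \<noteq> {}" using u0 by auto
      then show ?thesis using cInf_less_iff[OF _ bddM] \<open>Inf (norm ` M) < _\<close> that by auto
    qed
    then have "(norm v)\<^sup>2 < d\<^sup>2 + 1 / real (Suc n)"
    proof -
        have s0: "0 \<le> d\<^sup>2 + 1 / real (Suc n)" by simp
        have "(norm v)\<^sup>2 < (sqrt (d\<^sup>2 + 1 / real (Suc n)))\<^sup>2"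
          by (rule power_strict_mono) (use \<open>norm v < _\<close> in auto)
        then show ?thesis using real_sqrt_pow2[OF s0] by simp
      qed
    with \<open>v \<in> M\<close> show ?thesis by blast
  qed
  then obtain X where XM: "\<And>n. X n \<in> M" and Xn: "\<And>n. (norm (X n))\<^sup>2 < d\<^sup>2 + 1 / real (Suc n)"
    by metis
  have mid: "4 * d\<^sup>2 \<le> (norm (X m + X n))\<^sup>2" for m n
  proof -
    have "(1/2) *\<^sub>C (X m + X n) \<in> M" using XM[of m] XM[of n] by (simp add: M_def sc add)
    then have "d \<le> norm ((1/2) *\<^sub>C (X m + X n))" by (rule dle)
    then have "d \<le> norm (X m + X n) / 2" by (simp add: ch_norm_scaleC)
    then have "d\<^sup>2 \<le> (norm (X m + X n) / 2)\<^sup>2" using d0 by (simp add: power_mono)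
    then show ?thesis by (simp add: power_divide)
  qed
  have cauchy: "(norm (X m - X n))\<^sup>2 \<le> 2 / real (Suc m) + 2 / real (Suc n)" for m n
    using ch_parallelogram[of "X m" "X n"] mid[of m n] Xn[of m] Xn[of n] by simp
  have "Cauchy X"
  proof (rule CauchyI)
    fix e :: real assume e: "0 < e"
    obtain N :: nat where N: "4 / (e * e) < real N" using reals_Archimedean2 by blast
    show "\<exists>M. \<forall>m\<ge>M. \<forall>n\<ge>M. norm (X m - X n) < e"
    proof (intro exI allI impI)
      fix m n assume m: "N \<le> m" and n: "N \<le> n"
      have Npos: "0 < real N" using N e by (smt (verit) divide_nonneg_pos mult_pos_pos)
      have a: "2 / real (Suc m) \<le> 2 / real (Suc N)" using m by (simp add: frac_le)
      have b: "2 / real (Suc n) \<le> 2 / real (Suc N)" using n by (simp add: frac_le)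
      have c: "4 / real (Suc N) < e * e"
      proof -
        have "4 / (e * e) < real (Suc N)" using N by simp
        then show ?thesis using e by (simp add: field_simps)
      qed
      have "(norm (X m - X n))\<^sup>2 < e\<^sup>2" using cauchy[of m n] a b c by (simp add: power2_eq_square)
      then show "norm (X m - X n) < e" using e by (simp add: power_less_imp_less_base)
    qed
  qed
  then obtain u where Xu: "X \<longlonglongrightarrow> u" using Cauchy_convergent_iff convergent_def by blast
  have "(\<lambda>n. X n - u) \<longlonglongrightarrow> 0" using Xu by (simp add: LIM_zero)
  then have nz: "(\<lambda>n. norm (X n - u)) \<longlonglongrightarrow> 0" by (simp add: tendsto_norm_zero)
  have fu: "f u = 1"
  proof -
    have "(\<lambda>n. f (X n - u)) \<longlonglongrightarrow> 0"
    proof (rule Lim_null_comparison)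
      show "\<forall>\<^sub>F n in sequentially. norm (f (X n - u)) \<le> K * norm (X n - u)" using bd by simp
      show "(\<lambda>n. K * norm (X n - u)) \<longlonglongrightarrow> 0" using tendsto_mult_right_zero[OF nz] by simp
    qed
    moreover have "f (X n - u) = 1 - f u" for n using XM[of n] by (simp add: fdiff M_def)
    ultimately have "(\<lambda>n. 1 - f u) \<longlonglongrightarrow> 0" by simp
    then show ?thesis by (simp add: LIMSEQ_const_iff)
  qed
  have umin: "(norm u)\<^sup>2 \<le> (norm v)\<^sup>2" if "v \<in> M" for v
  proof (rule LIMSEQ_le)
    show "(\<lambda>n. (norm (X n))\<^sup>2) \<longlonglongrightarrow> (norm u)\<^sup>2" by (intro tendsto_intros Xu)
    have "(\<lambda>n. (norm v)\<^sup>2 + inverse (real (Suc n))) \<longlonglongrightarrow> (norm v)\<^sup>2 + 0"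
      by (intro tendsto_intros LIMSEQ_inverse_real_of_nat)
    then show "(\<lambda>n. (norm v)\<^sup>2 + inverse (real (Suc n))) \<longlonglongrightarrow> (norm v)\<^sup>2" by simp
    show "\<exists>N. \<forall>n\<ge>N. (norm (X n))\<^sup>2 \<le> (norm v)\<^sup>2 + inverse (real (Suc n))"
    proof (intro exI allI impI)
      fix n
      have "d\<^sup>2 \<le> (norm v)\<^sup>2" using dle[OF that] d0 by (simp add: power_mono)
      then show "(norm (X n))\<^sup>2 \<le> (norm v)\<^sup>2 + inverse (real (Suc n))"
        using Xn[of n] by (simp add: inverse_eq_divide)
    qed
  qed
  have orth: "cinner w u = 0" if "f w = 0" for w
  proof (rule ch_min_orth)
    fix s
    have "u + s *\<^sub>C w \<in> M" using fu that by (simp add: M_def add sc)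
    then show "(norm u)\<^sup>2 \<le> (norm (u + s *\<^sub>C w))\<^sup>2" by (rule umin)
  qed
  have un: "u \<noteq> 0" using fu f0 by auto
  define z where "z = complex_of_real (1 / (norm u)\<^sup>2) *\<^sub>C u"
  show ?thesis
  proof (intro exI allI)
    fix x
    have "f (x - f x *\<^sub>C u) = 0" by (simp add: fdiff sc fu)
    then have "cinner (x - f x *\<^sub>C u) u = 0" by (rule orth)
    then have "cinner x u = f x * complex_of_real ((norm u)\<^sup>2)"
      by (simp add: ch_simps ch_cinner_self)
    then show "f x = cinner x z" using un
      by (simp add: z_def ch_simps field_simps)
  qed
qed

lemma bcl_add: "bounded_clinear A \<Longrightarrow> A (x + y) = A x + A y"
  by (simp add: bounded_clinear_def clinear_def)
lemma bcl_scale: "bounded_clinear A \<Longrightarrow> A (c *\<^sub>C x) = c *\<^sub>C A x"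
  by (simp add: bounded_clinear_def clinear_def)
lemma bcl_zero: "bounded_clinear A \<Longrightarrow> A 0 = 0"
  using bcl_scale[of A 0 0] by simp
lemma bcl_minus: "bounded_clinear A \<Longrightarrow> A (- x) = - A x"
  using bcl_scale[of A "-1" x] by simp
lemma bcl_diff: "bounded_clinear A \<Longrightarrow> A (x - y) = A x - A y"
  by (simp only: diff_conv_add_uminus bcl_add bcl_minus)

lemma bcl_bound: "bounded_clinear A \<Longrightarrow> \<exists>K\<ge>0. \<forall>x. norm (A x) \<le> norm x * K"
proof -
  assume "bounded_clinear A"
  then obtain K where K: "\<forall>x. norm (A x) \<le> norm x * K" by (auto simp: bounded_clinear_def)
  have "norm (A x) \<le> norm x * \<bar>K\<bar>" for x
    using K[rule_format, of x] by (smt (verit) mult_left_mono norm_ge_zero)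
  then show ?thesis by (intro exI[of _ "\<bar>K\<bar>"]) auto
qed

lemma bcl_bounded_linear: "bounded_clinear A \<Longrightarrow> bounded_linear A"
proof -
  assume A: "bounded_clinear A"
  then obtain K where K: "\<forall>x. norm (A x) \<le> norm x * K" by (auto simp: bounded_clinear_def)
  show ?thesis
    by (rule bounded_linear_intro[where K=K]) (use A K in \<open>auto simp: bcl_add ch_scaleC_real[symmetric] bcl_scale\<close>)
qed

lemma bclI:
  assumes "\<And>x y. A (x + y) = A x + A y" "\<And>c x. A (c *\<^sub>C x) = c *\<^sub>C A x" "\<And>x. norm (A x) \<le> norm x * K"
  shows "bounded_clinear A"
  using assms unfolding bounded_clinear_def clinear_def by blast

lemma bcl_op_add: "bounded_clinear A \<Longrightarrow> bounded_clinear B \<Longrightarrow> bounded_clinear (op_add A B)"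
proof -
  assume A: "bounded_clinear A" and B: "bounded_clinear B"
  obtain K where K: "\<forall>x. norm (A x) \<le> norm x * K" using bcl_bound[OF A] by auto
  obtain L where L: "\<forall>x. norm (B x) \<le> norm x * L" using bcl_bound[OF B] by auto
  show ?thesis
  proof (rule bclI[where K="K + L"])
    fix x show "norm (op_add A B x) \<le> norm x * (K + L)"
      unfolding op_add_def using K[rule_format, of x] L[rule_format, of x]
      by (smt (verit) distrib_left norm_triangle_ineq)
  qed (simp_all add: op_add_def bcl_add[OF A] bcl_add[OF B] bcl_scale[OF A] bcl_scale[OF B] scaleC_add_right)
qed

lemma bcl_op_scale: "bounded_clinear A \<Longrightarrow> bounded_clinear (op_scale c A)"
proof -
  assume A: "bounded_clinear A"
  obtain K where K: "K \<ge> 0" "\<forall>x. norm (A x) \<le> norm x * K" using bcl_bound[OF A] by auto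
  show ?thesis
  proof (rule bclI[where K="cmod c * K"])
    fix x show "norm (op_scale c A x) \<le> norm x * (cmod c * K)"
      unfolding op_scale_def ch_norm_scaleC using K(2)[rule_format, of x]
      by (metis mult.left_commute mult_left_mono norm_ge_zero)
  qed (simp_all add: op_scale_def bcl_add[OF A] bcl_scale[OF A] scaleC_add_right scaleC_scaleC mult.commute)
qed

lemma bcl_comp: "bounded_clinear A \<Longrightarrow> bounded_clinear B \<Longrightarrow> bounded_clinear (A \<circ> B)"
proof -
  assume A: "bounded_clinear A" and B: "bounded_clinear B"
  obtain K where K: "K \<ge> 0" "\<forall>x. norm (A x) \<le> norm x * K" using bcl_bound[OF A] by auto
  obtain L where L: "L \<ge> 0" "\<forall>x. norm (B x) \<le> norm x * L" using bcl_bound[OF B] by auto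
  show ?thesis
  proof (rule bclI[where K="L * K"])
    fix x
    have "norm (A (B x)) \<le> norm (B x) * K" using K by auto
    also have "\<dots> \<le> norm x * L * K" using L K by (simp add: mult_right_mono)
    finally show "norm ((A \<circ> B) x) \<le> norm x * (L * K)" by (simp add: mult.assoc)
  qed (simp_all add: bcl_add[OF A] bcl_add[OF B] bcl_scale[OF A] bcl_scale[OF B])
qed

lemma adj_eqI:
  assumes "\<And>x y. cinner (A x) y = cinner x (C y)"
  shows "adj A = C"
  unfolding adj_def
proof (rule the_equality)
  show "\<forall>x y. cinner (A x) y = cinner x (C y)" using assms by blast
  fix B assume B: "\<forall>x y. cinner (A x) y = cinner x (B y)"
  show "B = C"
  proof
    fix y show "B y = C y" by (rule ch_cinner_ext) (metis B assms)
  qed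
qed

lemma adj_exists:
  assumes A: "bounded_clinear A"
  shows "\<exists>C. \<forall>x y. cinner (A x) y = cinner x (C y)"
proof -
  obtain K where K: "K \<ge> 0" "\<forall>x. norm (A x) \<le> norm x * K" using bcl_bound[OF A] by auto
  have "\<exists>z. \<forall>x. cinner (A x) y = cinner x z" for y
  proof (rule ch_riesz[where K="K * norm y"])
    show "cinner (A (x + x')) y = cinner (A x) y + cinner (A x') y" for x x'
      by (simp add: bcl_add[OF A] cinner_add_left)
    show "cinner (A (c *\<^sub>C x)) y = c * cinner (A x) y" for c x
      by (simp add: bcl_scale[OF A] cinner_scaleC_left)
    show "cmod (cinner (A x) y) \<le> K * norm y * norm x" for x
    proof -
      have "cmod (cinner (A x) y) \<le> norm (A x) * norm y" by (rule ch_CS)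
      also have "\<dots> \<le> norm x * K * norm y" using K by (simp add: mult_right_mono)
      finally show ?thesis by (simp add: algebra_simps)
    qed
  qed
  then show ?thesis by metis
qed

lemma adj_char:
  assumes "bounded_clinear A"
  shows "cinner (A x) y = cinner x (adj A y)"
proof -
  obtain C where C: "\<forall>x y. cinner (A x) y = cinner x (C y)" using adj_exists[OF assms] by blast
  then have "adj A = C" by (intro adj_eqI) blast
  then show ?thesis using C by simp
qed

lemma adj_char2:
  assumes "bounded_clinear A"
  shows "cinner (adj A x) y = cinner x (A y)"
  by (metis adj_char assms cinner_commute)

lemma adj_bcl:
  assumes A: "bounded_clinear A"
  shows "bounded_clinear (adj A)"
proof -
  obtain K where K: "K \<ge> 0" "\<forall>x. norm (A x) \<le> norm x * K" using bcl_bound[OF A] by auto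
  show ?thesis
  proof (rule bclI[where K=K])
    fix x y show "adj A (x + y) = adj A x + adj A y"
      by (rule ch_cinner_ext) (simp add: adj_char[OF A, symmetric] ch_cinner_add_right)
  next
    fix c x show "adj A (c *\<^sub>C x) = c *\<^sub>C adj A x"
      by (rule ch_cinner_ext) (simp add: adj_char[OF A, symmetric] ch_cinner_scaleC_right)
  next
    fix y
    have "(norm (adj A y))\<^sup>2 = Re (cinner (A (adj A y)) y)"
      by (simp add: ch_norm_sq adj_char[OF A])
    also have "\<dots> \<le> cmod (cinner (A (adj A y)) y)" by (rule complex_Re_le_cmod)
    also have "\<dots> \<le> norm (A (adj A y)) * norm y" by (rule ch_CS)
    also have "\<dots> \<le> norm (adj A y) * K * norm y" using K by (simp add: mult_right_mono)
    finally have h: "(norm (adj A y))\<^sup>2 \<le> norm (adj A y) * (K * norm y)" by (simp add: algebra_simps)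
    show "norm (adj A y) \<le> norm y * K"
    proof (cases "norm (adj A y) = 0")
      case True then show ?thesis using K by simp
    next
      case False
      then have "norm (adj A y) > 0" by simp
      with h show ?thesis by (simp add: power2_eq_square mult.commute)
    qed
  qed
qed

lemma adj_adj: "bounded_clinear A \<Longrightarrow> adj (adj A) = A"
  by (intro adj_eqI) (simp add: adj_char2)

lemma adj_quad: "bounded_clinear A \<Longrightarrow> cinner (adj A x) x = cnj (cinner (A x) x)"
  by (metis adj_char cinner_commute)

lemma bcl_wop: "bounded_clinear A \<Longrightarrow> bounded_clinear (wop \<phi> \<psi> t A)"
  unfolding wop_def by (intro bcl_op_add bcl_op_scale adj_bcl)

lemma wop_quad: "bounded_clinear A \<Longrightarrow>
  cinner (wop \<phi> \<psi> t A x) x = complex_of_real (\<phi> t) * cinner (A x) x + complex_of_real (\<psi> t) * cnj (cinner (A x) x)"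
  by (simp add: wop_def op_add_def op_scale_def cinner_add_left cinner_scaleC_left adj_quad)

lemma us_ne: "\<exists>x::'a::chilbert. x \<noteq> 0 \<Longrightarrow> (unit_sphere::'a set) \<noteq> {}"
proof -
  assume "\<exists>x::'a. x \<noteq> 0"
  then obtain x :: 'a where x: "x \<noteq> 0" by blast
  have "norm (complex_of_real (1 / norm x) *\<^sub>C x) = 1" using x by (simp add: ch_norm_scaleC norm_divide)
  then show ?thesis unfolding unit_sphere_def by blast
qed

lemma quad_le_onorm: "bounded_clinear T \<Longrightarrow> cmod (cinner (T x) x) \<le> onorm T * (norm x)\<^sup>2"
proof -
  assume T: "bounded_clinear T"
  have "cmod (cinner (T x) x) \<le> norm (T x) * norm x" by (rule ch_CS)
  also have "\<dots> \<le> onorm T * norm x * norm x"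
    using onorm[OF bcl_bounded_linear[OF T], of x] by (simp add: mult_right_mono)
  finally show ?thesis by (simp add: power2_eq_square mult.assoc)
qed

lemma quad_le_onorm_us: "bounded_clinear T \<Longrightarrow> x \<in> unit_sphere \<Longrightarrow> cmod (cinner (T x) x) \<le> onorm T"
  using quad_le_onorm[of T x] by (simp add: unit_sphere_def)

lemma numrad_bdd: "bounded_clinear T \<Longrightarrow> bdd_above ((\<lambda>x. cmod (cinner (T x) x)) ` unit_sphere)"
  by (rule bdd_aboveI[of _ "onorm T"]) (auto intro: quad_le_onorm_us)

lemma numrad_upper: "bounded_clinear T \<Longrightarrow> x \<in> unit_sphere \<Longrightarrow> cmod (cinner (T x) x) \<le> numrad T"
  unfolding numrad_def by (rule cSUP_upper) (auto intro: numrad_bdd)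

lemma numrad_least: "(unit_sphere::'a::chilbert set) \<noteq> {} \<Longrightarrow> (\<And>x. x \<in> unit_sphere \<Longrightarrow> cmod (cinner (T x) x) \<le> b)
   \<Longrightarrow> numrad (T::'a \<Rightarrow> 'a) \<le> b"
  unfolding numrad_def by (rule cSUP_least)

lemma numrad_nonneg: "(unit_sphere::'a::chilbert set) \<noteq> {} \<Longrightarrow> bounded_clinear (T::'a\<Rightarrow>'a) \<Longrightarrow> 0 \<le> numrad T"
  by (metis all_not_in_conv norm_ge_zero numrad_upper order_trans)

lemma numrad_le_onorm: "(unit_sphere::'a::chilbert set) \<noteq> {} \<Longrightarrow> bounded_clinear (T::'a\<Rightarrow>'a) \<Longrightarrow> numrad T \<le> onorm T"
  by (rule numrad_least) (auto intro: quad_le_onorm_us)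

lemma crawford_lower: "x \<in> unit_sphere \<Longrightarrow> crawford T \<le> cmod (cinner (T x) x)"
  unfolding crawford_def by (rule cINF_lower) (auto intro: bdd_belowI[of _ 0])

lemma crawford_greatest: "(unit_sphere::'a::chilbert set) \<noteq> {} \<Longrightarrow> (\<And>x. x \<in> unit_sphere \<Longrightarrow> b \<le> cmod (cinner (T x) x))
   \<Longrightarrow> b \<le> crawford (T::'a \<Rightarrow> 'a)"
  unfolding crawford_def by (rule cINF_greatest)

lemma quad_scaled:
  assumes T: "bounded_clinear T"
  shows "cmod (cinner (T x) x) \<le> numrad T * (norm x)\<^sup>2"
proof (cases "x = 0")
  case True then show ?thesis using bcl_zero[OF T] by simp
next
  case False
  define u where "u = complex_of_real (1 / norm x) *\<^sub>C x"
  have u: "u \<in> unit_sphere" using False by (simp add: u_def unit_sphere_def ch_norm_scaleC norm_divide)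
  have xu: "x = complex_of_real (norm x) *\<^sub>C u" using False
    by (simp add: u_def scaleC_scaleC scaleC_one)
  have "cinner (T x) x = complex_of_real ((norm x)\<^sup>2) * cinner (T u) u"
    by (subst (1 2) xu) (simp add: bcl_scale[OF T] cinner_scaleC_left ch_cinner_scaleC_right power2_eq_square)
  then have "cmod (cinner (T x) x) = (norm x)\<^sup>2 * cmod (cinner (T u) u)" by (simp add: norm_mult norm_power)
  also have "\<dots> \<le> (norm x)\<^sup>2 * numrad T" using numrad_upper[OF T u] by (simp add: mult_left_mono)
  finally show ?thesis by (simp add: mult.commute)
qed

lemma quad_expand: "bounded_clinear T \<Longrightarrow> cinner (T (x + a *\<^sub>C y)) (x + a *\<^sub>C y) =
  cinner (T x) x + a * cinner (T y) x + cnj a * cinner (T x) y + a * cnj a * cinner (T y) y"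
  by (simp add: bcl_add bcl_scale cinner_add_left ch_cinner_add_right cinner_scaleC_left ch_cinner_scaleC_right algebra_simps)

lemma norm_sq_expand: "(norm (x + a *\<^sub>C y))\<^sup>2 = (norm x)\<^sup>2 + 2 * Re (cnj a * cinner x (y::'a::chilbert)) + (cmod a)\<^sup>2 * (norm y)\<^sup>2"
proof -
  have "cinner y x = cnj (cinner x y)" by (rule cinner_commute)
  then show ?thesis unfolding ch_norm_sq
    by (simp add: cinner_add_left ch_cinner_add_right cinner_scaleC_left ch_cinner_scaleC_right
        ch_norm_sq[symmetric] cmod_power2 power2_eq_square algebra_simps cmod_sq_expand)
qed

lemma polar4: assumes T: "bounded_clinear T"
  shows "4 * cinner (T x) y = cinner (T (x + 1 *\<^sub>C y)) (x + 1 *\<^sub>C y) - cinner (T (x + (-1) *\<^sub>C y)) (x + (-1) *\<^sub>C y)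
     + \<i> * cinner (T (x + \<i> *\<^sub>C y)) (x + \<i> *\<^sub>C y) - \<i> * cinner (T (x + (-\<i>) *\<^sub>C y)) (x + (-\<i>) *\<^sub>C y)"
  unfolding quad_expand[OF T] by (simp add: algebra_simps)
lemma tri4: "cmod (a - b + \<i> * c - \<i> * d) \<le> cmod a + cmod b + cmod c + cmod d"
proof -
  have "cmod (a - b + \<i> * c - \<i> * d) \<le> cmod (a - b + \<i> * c) + cmod (\<i> * d)" by (rule norm_triangle_ineq4)
  also have "cmod (a - b + \<i> * c) \<le> cmod (a - b) + cmod (\<i> * c)" by (rule norm_triangle_ineq)
  also have "cmod (a - b) \<le> cmod a + cmod b" by (rule norm_triangle_ineq4)
  finally show ?thesis by (simp add: norm_mult)
qed
lemma sum4: "(norm (x + 1 *\<^sub>C y))\<^sup>2 + (norm (x + (-1) *\<^sub>C y))\<^sup>2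
        + (norm (x + \<i> *\<^sub>C y))\<^sup>2 + (norm (x + (-\<i>) *\<^sub>C y))\<^sup>2 = 4 * (norm x)\<^sup>2 + 4 * (norm (y::'a::chilbert))\<^sup>2"
      unfolding norm_sq_expand by simp

lemma onorm_le_2numrad:
  assumes ne: "(unit_sphere::'a::chilbert set) \<noteq> {}" and T: "bounded_clinear (T::'a\<Rightarrow>'a)"
  shows "onorm T \<le> 2 * numrad T"
proof (rule onorm_bound)
  show "0 \<le> 2 * numrad T" using numrad_nonneg[OF ne T] by simp
  fix x
  show "norm (T x) \<le> 2 * numrad T * norm x"
  proof (cases "T x = 0")
    case True then show ?thesis using numrad_nonneg[OF ne T] by simp
  next
    case False
    then have x0: "x \<noteq> 0" using bcl_zero[OF T] by auto
    define r where "r = norm x / norm (T x)"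
    define y where "y = complex_of_real r *\<^sub>C T x"
    have r: "r > 0" using False x0 by (simp add: r_def)
    have ny: "norm y = norm x" using False by (simp add: y_def ch_norm_scaleC r_def norm_divide)
    have cy: "cinner (T x) y = complex_of_real (norm x * norm (T x))"
      using False by (simp add: y_def ch_cinner_scaleC_right ch_cinner_self r_def power2_eq_square)
    define q where "q a = cinner (T (x + a *\<^sub>C y)) (x + a *\<^sub>C y)" for a
    have P: "4 * cinner (T x) y = q 1 - q (-1) + \<i> * q \<i> - \<i> * q (- \<i>)"
      unfolding q_def by (rule polar4[OF T])
    have qb: "cmod (q a) \<le> numrad T * (norm (x + a *\<^sub>C y))\<^sup>2" for a
      unfolding q_def by (rule quad_scaled[OF T])
    have "4 * (norm x * norm (T x)) = cmod (4 * cinner (T x) y)"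
      using cy by (simp add: norm_mult)
    also have "\<dots> \<le> cmod (q 1) + cmod (q (-1)) + cmod (q \<i>) + cmod (q (-\<i>))"
      unfolding P by (rule tri4)
    also have "\<dots> \<le> numrad T * ((norm (x + 1 *\<^sub>C y))\<^sup>2 + (norm (x + (-1) *\<^sub>C y))\<^sup>2
        + (norm (x + \<i> *\<^sub>C y))\<^sup>2 + (norm (x + (-\<i>) *\<^sub>C y))\<^sup>2)"
      using qb[of 1] qb[of "-1"] qb[of \<i>] qb[of "-\<i>"] by (simp only: distrib_left)
    also have "(norm (x + 1 *\<^sub>C y))\<^sup>2 + (norm (x + (-1) *\<^sub>C y))\<^sup>2
        + (norm (x + \<i> *\<^sub>C y))\<^sup>2 + (norm (x + (-\<i>) *\<^sub>C y))\<^sup>2 = 8 * (norm x)\<^sup>2"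
      unfolding sum4 ny by simp
    finally have "4 * (norm x * norm (T x)) \<le> 4 * (2 * numrad T * norm x * norm x)"
      by (simp add: power2_eq_square algebra_simps)
    then have "norm x * norm (T x) \<le> norm x * (2 * numrad T * norm x)" by (simp add: algebra_simps)
    then show ?thesis using x0 by simp
  qed
qed

lemma onorm_le_numrad_herm:
  assumes ne: "(unit_sphere::'a::chilbert set) \<noteq> {}" and T: "bounded_clinear (T::'a\<Rightarrow>'a)"
    and H: "\<And>x y. cinner (T x) y = cinner x (T y)"
  shows "onorm T \<le> numrad T"
proof (rule onorm_bound)
  show "0 \<le> numrad T" using numrad_nonneg[OF ne T] by simp
  fix x
  show "norm (T x) \<le> numrad T * norm x"
  proof (cases "T x = 0")
    case True then show ?thesis using numrad_nonneg[OF ne T] by simp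
  next
    case False
    then have x0: "x \<noteq> 0" using bcl_zero[OF T] by auto
    define r where "r = norm x / norm (T x)"
    define y where "y = complex_of_real r *\<^sub>C T x"
    have ny: "norm y = norm x" using False by (simp add: y_def ch_norm_scaleC r_def norm_divide)
    have cy: "cinner (T x) y = complex_of_real (norm x * norm (T x))"
      using False by (simp add: y_def ch_cinner_scaleC_right ch_cinner_self r_def power2_eq_square)
    have cy2: "cinner (T y) x = complex_of_real (norm x * norm (T x))"
      using cy by (metis H cinner_commute complex_cnj_complex_of_real)
    define q where "q a = cinner (T (x + a *\<^sub>C y)) (x + a *\<^sub>C y)" for a
    have P: "4 * cinner (T x) y = q 1 - q (-1)"
      unfolding q_def quad_expand[OF T] using cy cy2 by (simp add: algebra_simps)
    have qb: "cmod (q a) \<le> numrad T * (norm (x + a *\<^sub>C y))\<^sup>2" for a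
      unfolding q_def by (rule quad_scaled[OF T])
    have "4 * (norm x * norm (T x)) = cmod (4 * cinner (T x) y)"
      using cy by (simp add: norm_mult)
    also have "\<dots> \<le> cmod (q 1) + cmod (q (-1))"
      unfolding P by (rule norm_triangle_ineq4)
    also have "\<dots> \<le> numrad T * ((norm (x + 1 *\<^sub>C y))\<^sup>2 + (norm (x + (-1) *\<^sub>C y))\<^sup>2)"
      using qb[of 1] qb[of "-1"] by (simp only: distrib_left)
    also have "(norm (x + 1 *\<^sub>C y))\<^sup>2 + (norm (x + (-1) *\<^sub>C y))\<^sup>2 = 4 * (norm x)\<^sup>2"
      unfolding norm_sq_expand ny by simp
    finally have "4 * (norm x * norm (T x)) \<le> 4 * (numrad T * norm x * norm x)"
      by (simp add: power2_eq_square algebra_simps)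
    then have "norm x * norm (T x) \<le> norm x * (numrad T * norm x)" by (simp add: algebra_simps)
    then show ?thesis using x0 by simp
  qed
qed

lemma numrad_eq_onorm_herm:
  assumes ne: "(unit_sphere::'a::chilbert set) \<noteq> {}" and T: "bounded_clinear (T::'a\<Rightarrow>'a)"
    and H: "\<And>x y. cinner (T x) y = cinner x (T y)"
  shows "numrad T = onorm T"
  using numrad_le_onorm[OF ne T] onorm_le_numrad_herm[OF ne T H] by simp

lemma numrad_cmult:
  assumes ne: "(unit_sphere::'a::chilbert set) \<noteq> {}" and S: "bounded_clinear (S::'a\<Rightarrow>'a)"
    and T: "bounded_clinear T" and c: "c \<ge> 0"
    and h: "\<And>x. x \<in> unit_sphere \<Longrightarrow> cmod (cinner (S x) x) = c * cmod (cinner (T x) x)"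
  shows "numrad S = c * numrad T"
proof (rule antisym)
  show "numrad S \<le> c * numrad T"
    by (rule numrad_least[OF ne]) (simp add: h c mult_left_mono numrad_upper[OF T])
  show "c * numrad T \<le> numrad S"
  proof (cases "c = 0")
    case True then show ?thesis using numrad_nonneg[OF ne S] by simp
  next
    case False
    then have cp: "c > 0" using c by simp
    have "numrad T \<le> numrad S / c"
    proof (rule numrad_least[OF ne])
      fix x :: 'a assume x: "x \<in> unit_sphere"
      have "c * cmod (cinner (T x) x) \<le> numrad S" using numrad_upper[OF S x] h[OF x] by simp
      then show "cmod (cinner (T x) x) \<le> numrad S / c" using cp by (simp add: field_simps)
    qed
    then show ?thesis using cp by (simp add: field_simps)
  qed
qed

lemma crawford_cmult:
  assumes ne: "(unit_sphere::'a::chilbert set) \<noteq> {}" and c: "c \<ge> 0"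
    and h: "\<And>x. x \<in> unit_sphere \<Longrightarrow> cmod (cinner (S x) x) = c * cmod (cinner (T x) x)"
  shows "crawford (S::'a\<Rightarrow>'a) = c * crawford T"
proof (rule antisym)
  show "c * crawford T \<le> crawford S"
    by (rule crawford_greatest[OF ne]) (simp add: h c mult_left_mono crawford_lower)
  show "crawford S \<le> c * crawford T"
  proof (cases "c = 0")
    case True
    obtain x :: 'a where x: "x \<in> unit_sphere" using ne by blast
    show ?thesis using crawford_lower[OF x, of S] h[OF x] True by simp
  next
    case False
    then have cp: "c > 0" using c by simp
    have "crawford S / c \<le> crawford T"
    proof (rule crawford_greatest[OF ne])
      fix x :: 'a assume x: "x \<in> unit_sphere"
      have "crawford S \<le> c * cmod (cinner (T x) x)" using crawford_lower[OF x, of S] h[OF x] by simp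
      then show "crawford S / c \<le> cmod (cinner (T x) x)" using cp by (simp add: field_simps)
    qed
    then show ?thesis using cp by (simp add: field_simps)
  qed
qed

lemma pw_upper: "cmod (complex_of_real a * z + complex_of_real b * cnj z) \<le> (\<bar>a\<bar> + \<bar>b\<bar>) * cmod z"
  by (metis (no_types, opaque_lifting) complex_mod_cnj distrib_right norm_mult norm_of_real norm_triangle_ineq)

lemma pw_lower: "\<bar>\<bar>a\<bar> - \<bar>b\<bar>\<bar> * cmod z \<le> cmod (complex_of_real a * z + complex_of_real b * cnj z)"
proof -
  have 1: "cmod (complex_of_real a * z) - cmod (complex_of_real b * cnj z) \<le> cmod (complex_of_real a * z + complex_of_real b * cnj z)"
    by (rule norm_diff_ineq)
  have 2: "cmod (complex_of_real b * cnj z) - cmod (complex_of_real a * z) \<le> cmod (complex_of_real a * z + complex_of_real b * cnj z)"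
    by (metis add.commute norm_diff_ineq)
  show ?thesis using 1 2 by (simp add: norm_mult abs_if left_diff_distrib split: if_splits)
qed

lemma pw_swap: "cmod (complex_of_real a * z + complex_of_real b * cnj z) = cmod (complex_of_real b * z + complex_of_real a * cnj z)"
proof -
  have "cnj (complex_of_real a * z + complex_of_real b * cnj z) = complex_of_real b * z + complex_of_real a * cnj z"
    by simp
  then show ?thesis by (metis complex_mod_cnj)
qed

lemma pw_min: "min \<bar>a + b\<bar> \<bar>a - b\<bar> * cmod z \<le> cmod (complex_of_real a * z + complex_of_real b * cnj z)"
proof -
  define m where "m = min \<bar>a + b\<bar> \<bar>a - b\<bar>"
  define w where "w = complex_of_real a * z + complex_of_real b * cnj z"
  have m0: "0 \<le> m" by (simp add: m_def)
  have m1: "m\<^sup>2 \<le> (a + b)\<^sup>2" using power_mono[of m "\<bar>a+b\<bar>" 2] m0 by (simp add: m_def)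
  have m2: "m\<^sup>2 \<le> (a - b)\<^sup>2" using power_mono[of m "\<bar>a-b\<bar>" 2] m0 by (simp add: m_def)
  have "(cmod w)\<^sup>2 = (a + b)\<^sup>2 * (Re z)\<^sup>2 + (a - b)\<^sup>2 * (Im z)\<^sup>2"
    by (simp add: w_def cmod_power2 power2_eq_square algebra_simps cmod_sq_expand)
  moreover have "(m * cmod z)\<^sup>2 = m\<^sup>2 * (Re z)\<^sup>2 + m\<^sup>2 * (Im z)\<^sup>2"
    by (simp add: cmod_power2 power_mult_distrib algebra_simps)
  moreover have "m\<^sup>2 * (Re z)\<^sup>2 + m\<^sup>2 * (Im z)\<^sup>2 \<le> (a + b)\<^sup>2 * (Re z)\<^sup>2 + (a - b)\<^sup>2 * (Im z)\<^sup>2"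
    using m1 m2 by (intro add_mono mult_right_mono) auto
  ultimately have "(m * cmod z)\<^sup>2 \<le> (cmod w)\<^sup>2" by simp
  then show ?thesis unfolding m_def[symmetric] w_def[symmetric]
    by (rule power2_le_imp_le) simp
qed

lemma pw_b3: "(p::real) * q * Re c \<le> \<bar>p * q\<bar> * cmod c"
proof -
  have "p * q * Re c \<le> \<bar>p * q * Re c\<bar>" by simp
  also have "\<dots> = \<bar>p * q\<bar> * \<bar>Re c\<bar>" by (simp add: abs_mult)
  also have "\<dots> \<le> \<bar>p * q\<bar> * cmod c" by (simp add: mult_left_mono abs_Re_le_cmod)
  finally show ?thesis .
qed
lemma numrad_adj:
  assumes ne: "(unit_sphere::'a::chilbert set) \<noteq> {}" and T: "bounded_clinear (T::'a\<Rightarrow>'a)"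
  shows "numrad (adj T) = numrad T"
  using numrad_cmult[OF ne adj_bcl[OF T] T, of 1] by (simp add: adj_quad[OF T])

lemma adj_bound:
  assumes T: "bounded_clinear T"
  shows "norm (adj T y) \<le> onorm T * norm y"
proof -
  have "(norm (adj T y))\<^sup>2 = Re (cinner (T (adj T y)) y)"
    by (simp add: ch_norm_sq adj_char[OF T])
  also have "\<dots> \<le> cmod (cinner (T (adj T y)) y)" by (rule complex_Re_le_cmod)
  also have "\<dots> \<le> norm (T (adj T y)) * norm y" by (rule ch_CS)
  also have "\<dots> \<le> onorm T * norm (adj T y) * norm y"
    using onorm[OF bcl_bounded_linear[OF T]] by (simp add: mult_right_mono)
  finally have h: "(norm (adj T y))\<^sup>2 \<le> norm (adj T y) * (onorm T * norm y)" by (simp add: algebra_simps)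
  show ?thesis
  proof (cases "norm (adj T y) = 0")
    case True then show ?thesis using onorm_pos_le[OF bcl_bounded_linear[OF T]] by simp
  next
    case False
    then have "norm (adj T y) > 0" by simp
    with h show ?thesis by (simp add: power2_eq_square)
  qed
qed

theorem proposition2p1:
  fixes A B :: "'a::chilbert \<Rightarrow> 'a"
    and \<phi> \<psi> \<phi>1 \<phi>2 \<psi>1 \<psi>2 :: "real \<Rightarrow> real"
    and t :: real
  assumes nontriv: "\<exists>x::'a. x \<noteq> 0"
    and A: "bounded_clinear A" and B: "bounded_clinear B"
    and t: "t \<in> {0..1}"
    and cont: "continuous_on {0..1} \<phi>" "continuous_on {0..1} \<psi>"
      "continuous_on {0..1} \<phi>1" "continuous_on {0..1} \<phi>2"
      "continuous_on {0..1} \<psi>1" "continuous_on {0..1} \<psi>2"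
  shows "(wnumrad (\<lambda>_. 0) \<psi> t A = \<bar>\<psi> t\<bar> * numrad A \<and>
     wcrawford (\<lambda>_. 0) \<psi> t A = \<bar>\<psi> t\<bar> * crawford A)
  \<and> (wnumrad \<phi> (\<lambda>_. 0) t A = \<bar>\<phi> t\<bar> * numrad A \<and>
     wcrawford \<phi> (\<lambda>_. 0) t A = \<bar>\<phi> t\<bar> * crawford A)
  \<and> (wnumrad (\<lambda>_. 1) (\<lambda>_. 1) t A = 2 * onorm (ReOp A) \<and>
     wcrawford (\<lambda>_. 1) (\<lambda>_. 1) t A = 2 * crawford (ReOp A))
  \<and> (wnumrad (\<lambda>_. 1) (\<lambda>_. -1) t A = 2 * onorm (ImOp A) \<and>
     wcrawford (\<lambda>_. 1) (\<lambda>_. -1) t A = 2 * crawford (ImOp A))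
  \<and> (wnumrad \<phi> \<psi> t (op_scale \<i> A) = wnumrad \<phi> (\<lambda>s. - \<psi> s) t A)
  \<and> (wnorm \<phi> \<psi> t A / 2 \<le> wnumrad \<phi> \<psi> t A \<and> wnumrad \<phi> \<psi> t A \<le> wnorm \<phi> \<psi> t A)
  \<and> (wnumrad \<phi> \<psi> t A \<le> (\<bar>\<phi> t\<bar> + \<bar>\<psi> t\<bar>) * numrad A \<and>
     wcrawford \<phi> \<psi> t A \<ge> \<bar>\<bar>\<phi> t\<bar> - \<bar>\<psi> t\<bar>\<bar> * crawford A)
  \<and> (wnumrad \<phi> \<phi> t A = 2 * \<bar>\<phi> t\<bar> * numrad (ReOp A) \<and>
     2 * \<bar>\<phi> t\<bar> * numrad (ReOp A) = 2 * \<bar>\<phi> t\<bar> * onorm (ReOp A))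
  \<and> (wnumrad \<psi> \<psi> t A = 2 * \<bar>\<psi> t\<bar> * numrad (ReOp A) \<and>
     2 * \<bar>\<psi> t\<bar> * numrad (ReOp A) = 2 * \<bar>\<psi> t\<bar> * onorm (ReOp A))
  \<and> (adj A = A \<longrightarrow>
     wnumrad \<phi> \<psi> t A = \<bar>\<phi> t + \<psi> t\<bar> * numrad A \<and>
     \<bar>\<phi> t + \<psi> t\<bar> * numrad A = \<bar>\<phi> t + \<psi> t\<bar> * onorm A)
  \<and> (wnumrad \<phi> \<psi> t A = wnumrad \<psi> \<phi> t (adj A))
  \<and> (adj A = A \<longrightarrow> wnumrad \<phi> \<psi> t A = wnumrad \<psi> \<phi> t A)
  \<and> (wnumrad \<phi> \<psi> t (op_add A B) \<le> wnumrad \<phi> \<psi> t A + wnumrad \<phi> \<psi> t B)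
  \<and> (wcrawford \<phi> \<psi> t (op_add A B) \<le> wnumrad \<phi> \<psi> t A + wcrawford \<phi> \<psi> t B)
  \<and> (wnumrad \<phi> \<psi> t (A \<circ> B) \<le> (\<bar>\<phi> t\<bar> + \<bar>\<psi> t\<bar>) * numrad (A \<circ> B))
  \<and> (wcrawford \<phi> \<psi> t (A \<circ> B) \<le> \<bar>\<phi> t\<bar> * crawford (A \<circ> B) + \<bar>\<psi> t\<bar> * numrad (A \<circ> B))
  \<and> ((onorm (wop \<phi> \<psi> t (A \<circ> B)))\<^sup>2 \<le>
       ((\<bar>\<phi> t\<bar>)\<^sup>2 + (\<bar>\<psi> t\<bar>)\<^sup>2) * (onorm (A \<circ> B))\<^sup>2
       + \<bar>\<phi> t * \<psi> t\<bar> * numrad ((A \<circ> B) \<circ> (A \<circ> B))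
       + \<bar>\<phi> t * \<psi> t\<bar> * numrad ((adj B \<circ> adj A) \<circ> (adj B \<circ> adj A)))
  \<and> (wnumrad (\<lambda>s. \<phi>1 s + \<phi>2 s) (\<lambda>s. \<psi>1 s + \<psi>2 s) t A
       \<le> wnumrad \<phi>1 \<psi>1 t A + wnumrad \<phi>2 \<psi>2 t A)
  \<and> (wcrawford \<phi> \<psi> t A \<ge> min \<bar>\<phi> t + \<psi> t\<bar> \<bar>\<phi> t - \<psi> t\<bar> * crawford A)"
proof -
  have ne: "(unit_sphere::'a set) \<noteq> {}" using us_ne[OF nontriv] .
  have Aa: "bounded_clinear (adj A)" using adj_bcl[OF A] .
  have ReA: "bounded_clinear (ReOp A)" unfolding ReOp_def by (intro bcl_op_scale bcl_op_add A Aa)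
  have ImA: "bounded_clinear (ImOp A)" unfolding ImOp_def by (intro bcl_op_scale bcl_op_add A Aa)
  have ReQ: "cinner (ReOp A x) x = (1/2) * (cinner (A x) x + cnj (cinner (A x) x))" for x
    by (simp add: ReOp_def op_scale_def op_add_def cinner_scaleC_left cinner_add_left adj_quad[OF A])
  have ImQ: "cinner (ImOp A x) x = (1/(2*\<i>)) * (cinner (A x) x - cnj (cinner (A x) x))" for x
    by (simp add: ImOp_def op_scale_def op_add_def cinner_scaleC_left cinner_add_left ch_cinner_diff_left adj_quad[OF A])
  have ReH: "cinner (ReOp A x) y = cinner x (ReOp A y)" for x y
    by (simp add: ReOp_def op_scale_def op_add_def cinner_scaleC_left cinner_add_left
        ch_cinner_scaleC_right ch_cinner_add_right adj_char[OF A] adj_char2[OF A] add.commute)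
  have ImH: "cinner (ImOp A x) y = cinner x (ImOp A y)" for x y
    by (simp add: ImOp_def op_scale_def op_add_def cinner_scaleC_left cinner_add_left
        ch_cinner_scaleC_right ch_cinner_add_right adj_char[OF A] adj_char2[OF A] ch_cinner_minus_right
        ch_cinner_minus_left ch_cinner_diff_left ch_cinner_diff_right algebra_simps)
  have ReN: "numrad (ReOp A) = onorm (ReOp A)" by (rule numrad_eq_onorm_herm[OF ne ReA ReH])
  have ImN: "numrad (ImOp A) = onorm (ImOp A)" by (rule numrad_eq_onorm_herm[OF ne ImA ImH])
  have W: "\<And>\<phi> \<psi>. bounded_clinear (wop \<phi> \<psi> t A)" using bcl_wop[OF A] .
  note WQ = wop_quad[OF A]

  have i1: "wnumrad (\<lambda>_. 0) \<psi> t A = \<bar>\<psi> t\<bar> * numrad A \<and>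
     wcrawford (\<lambda>_. 0) \<psi> t A = \<bar>\<psi> t\<bar> * crawford A"
    unfolding wnumrad_def wcrawford_def
    by (intro conjI numrad_cmult[OF ne W A] crawford_cmult[OF ne]) (simp_all add: WQ norm_mult)
  have i2: "wnumrad \<phi> (\<lambda>_. 0) t A = \<bar>\<phi> t\<bar> * numrad A \<and>
     wcrawford \<phi> (\<lambda>_. 0) t A = \<bar>\<phi> t\<bar> * crawford A"
    unfolding wnumrad_def wcrawford_def
    by (intro conjI numrad_cmult[OF ne W A] crawford_cmult[OF ne]) (simp_all add: WQ norm_mult)
  have i3: "wnumrad (\<lambda>_. 1) (\<lambda>_. 1) t A = 2 * onorm (ReOp A) \<and>
     wcrawford (\<lambda>_. 1) (\<lambda>_. 1) t A = 2 * crawford (ReOp A)"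
    unfolding wnumrad_def wcrawford_def ReN[symmetric]
    by (intro conjI numrad_cmult[OF ne W ReA] crawford_cmult[OF ne]) (simp_all add: WQ ReQ norm_mult)
  have i4: "wnumrad (\<lambda>_. 1) (\<lambda>_. -1) t A = 2 * onorm (ImOp A) \<and>
     wcrawford (\<lambda>_. 1) (\<lambda>_. -1) t A = 2 * crawford (ImOp A)"
    unfolding wnumrad_def wcrawford_def ImN[symmetric]
    by (intro conjI numrad_cmult[OF ne W ImA] crawford_cmult[OF ne]) (simp_all add: WQ ImQ norm_mult norm_divide)
  have i5: "wnumrad \<phi> \<psi> t (op_scale \<i> A) = wnumrad \<phi> (\<lambda>s. - \<psi> s) t A"
  proof -
    have iA: "bounded_clinear (op_scale \<i> A)" by (rule bcl_op_scale[OF A])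
    have iq: "cinner (op_scale \<i> A x) x = \<i> * cinner (A x) x" for x
      by (simp add: op_scale_def cinner_scaleC_left)
    have e: "complex_of_real (\<phi> t) * (\<i> * z) + complex_of_real (\<psi> t) * cnj (\<i> * z)
       = \<i> * (complex_of_real (\<phi> t) * z + complex_of_real (- \<psi> t) * cnj z)" for z
      by (simp add: algebra_simps)
    have e': "cmod (complex_of_real (\<phi> t) * (\<i> * z) + complex_of_real (\<psi> t) * cnj (\<i> * z))
       = cmod (complex_of_real (\<phi> t) * z + complex_of_real (- \<psi> t) * cnj z)" for z
      by (subst e) (simp only: norm_mult norm_ii mult_1_left)
    have "numrad (wop \<phi> \<psi> t (op_scale \<i> A)) = 1 * numrad (wop \<phi> (\<lambda>s. - \<psi> s) t A)"
      by (rule numrad_cmult[OF ne bcl_wop[OF iA] W])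
        (simp, simp only: wop_quad[OF iA] WQ iq e' mult_1_left)
    then show ?thesis unfolding wnumrad_def by simp
  qed
  have i6: "wnorm \<phi> \<psi> t A / 2 \<le> wnumrad \<phi> \<psi> t A \<and> wnumrad \<phi> \<psi> t A \<le> wnorm \<phi> \<psi> t A"
    unfolding wnorm_def wnumrad_def using onorm_le_2numrad[OF ne W[of \<phi> \<psi>]] numrad_le_onorm[OF ne W[of \<phi> \<psi>]] by simp
  have i7: "wnumrad \<phi> \<psi> t A \<le> (\<bar>\<phi> t\<bar> + \<bar>\<psi> t\<bar>) * numrad A \<and>
     wcrawford \<phi> \<psi> t A \<ge> \<bar>\<bar>\<phi> t\<bar> - \<bar>\<psi> t\<bar>\<bar> * crawford A"
  proof
    show "wnumrad \<phi> \<psi> t A \<le> (\<bar>\<phi> t\<bar> + \<bar>\<psi> t\<bar>) * numrad A"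
      unfolding wnumrad_def
    proof (rule numrad_least[OF ne])
      fix x :: 'a assume x: "x \<in> unit_sphere"
      have "(\<bar>\<phi> t\<bar> + \<bar>\<psi> t\<bar>) * cmod (cinner (A x) x) \<le> (\<bar>\<phi> t\<bar> + \<bar>\<psi> t\<bar>) * numrad A"
        using numrad_upper[OF A x] by (simp add: mult_left_mono)
      then show "cmod (cinner (wop \<phi> \<psi> t A x) x) \<le> (\<bar>\<phi> t\<bar> + \<bar>\<psi> t\<bar>) * numrad A"
        unfolding WQ by (rule order_trans[OF pw_upper])
    qed
    show "wcrawford \<phi> \<psi> t A \<ge> \<bar>\<bar>\<phi> t\<bar> - \<bar>\<psi> t\<bar>\<bar> * crawford A"
      unfolding wcrawford_def
    proof (rule crawford_greatest[OF ne])
      fix x :: 'a assume x: "x \<in> unit_sphere"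
      show "\<bar>\<bar>\<phi> t\<bar> - \<bar>\<psi> t\<bar>\<bar> * crawford A \<le> cmod (cinner (wop \<phi> \<psi> t A x) x)"
      proof -
        have "\<bar>\<bar>\<phi> t\<bar> - \<bar>\<psi> t\<bar>\<bar> * crawford A \<le> \<bar>\<bar>\<phi> t\<bar> - \<bar>\<psi> t\<bar>\<bar> * cmod (cinner (A x) x)"
          using crawford_lower[OF x, of A] by (simp add: mult_left_mono)
        then show ?thesis unfolding WQ using pw_lower by (rule order_trans)
      qed
    qed
  qed
  have i8: "wnumrad \<phi> \<phi> t A = 2 * \<bar>\<phi> t\<bar> * numrad (ReOp A) \<and>
     2 * \<bar>\<phi> t\<bar> * numrad (ReOp A) = 2 * \<bar>\<phi> t\<bar> * onorm (ReOp A)"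
    unfolding wnumrad_def ReN
    by (intro conjI numrad_cmult[OF ne W ReA, unfolded ReN] refl)
      (simp_all add: WQ ReQ norm_mult distrib_left[symmetric])
  have i9: "wnumrad \<psi> \<psi> t A = 2 * \<bar>\<psi> t\<bar> * numrad (ReOp A) \<and>
     2 * \<bar>\<psi> t\<bar> * numrad (ReOp A) = 2 * \<bar>\<psi> t\<bar> * onorm (ReOp A)"
    unfolding wnumrad_def ReN
    by (intro conjI numrad_cmult[OF ne W ReA, unfolded ReN] refl)
      (simp_all add: WQ ReQ norm_mult distrib_left[symmetric])
  have i10: "adj A = A \<longrightarrow>
     wnumrad \<phi> \<psi> t A = \<bar>\<phi> t + \<psi> t\<bar> * numrad A \<and>
     \<bar>\<phi> t + \<psi> t\<bar> * numrad A = \<bar>\<phi> t + \<psi> t\<bar> * onorm A"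
  proof
    assume sa: "adj A = A"
    have cz: "cnj (cinner (A x) x) = cinner (A x) x" for x using adj_quad[OF A, of x] sa by simp
    have H: "cinner (A x) y = cinner x (A y)" for x y using adj_char[OF A, of x y] sa by simp
    have ca: "cmod (complex_of_real a + complex_of_real b) = \<bar>a + b\<bar>" for a b
      by (metis norm_of_real of_real_add)
    show "wnumrad \<phi> \<psi> t A = \<bar>\<phi> t + \<psi> t\<bar> * numrad A \<and>
     \<bar>\<phi> t + \<psi> t\<bar> * numrad A = \<bar>\<phi> t + \<psi> t\<bar> * onorm A"
      unfolding wnumrad_def numrad_eq_onorm_herm[OF ne A H, symmetric]
      by (intro conjI numrad_cmult[OF ne W A] refl)
        (simp_all add: WQ cz norm_mult distrib_right[symmetric] ca)
  qed
  have i11: "wnumrad \<phi> \<psi> t A = wnumrad \<psi> \<phi> t (adj A)"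
  proof -
    have "numrad (wop \<phi> \<psi> t A) = 1 * numrad (wop \<psi> \<phi> t (adj A))"
      by (rule numrad_cmult[OF ne W bcl_wop[OF Aa]])
        (simp_all add: WQ wop_quad[OF Aa] adj_quad[OF A] add.commute)
    then show ?thesis unfolding wnumrad_def by simp
  qed
  have i12: "adj A = A \<longrightarrow> wnumrad \<phi> \<psi> t A = wnumrad \<psi> \<phi> t A"
  proof
    have "numrad (wop \<phi> \<psi> t A) = 1 * numrad (wop \<psi> \<phi> t A)"
      by (rule numrad_cmult[OF ne W W]) (simp_all add: WQ pw_swap)
    then show "wnumrad \<phi> \<psi> t A = wnumrad \<psi> \<phi> t A" unfolding wnumrad_def by simp
  qed

  have Bw: "\<And>\<phi> \<psi>. bounded_clinear (wop \<phi> \<psi> t B)" using bcl_wop[OF B] .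
  have AB: "bounded_clinear (op_add A B)" using bcl_op_add[OF A B] .
  have ABw: "\<And>\<phi> \<psi>. bounded_clinear (wop \<phi> \<psi> t (op_add A B))" using bcl_wop[OF AB] .
  have sumeq: "cinner (wop \<phi> \<psi> t (op_add A B) x) x = cinner (wop \<phi> \<psi> t A x) x + cinner (wop \<phi> \<psi> t B x) x" for x
  proof -
    have "cinner (op_add A B x) x = cinner (A x) x + cinner (B x) x" by (simp add: op_add_def cinner_add_left)
    then show ?thesis by (simp add: wop_quad[OF AB] WQ wop_quad[OF B] algebra_simps)
  qed
  have sumle: "cmod (cinner (wop \<phi> \<psi> t (op_add A B) x) x) \<le> cmod (cinner (wop \<phi> \<psi> t A x) x) + cmod (cinner (wop \<phi> \<psi> t B x) x)" for x
    unfolding sumeq by (rule norm_triangle_ineq)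
  have i13: "wnumrad \<phi> \<psi> t (op_add A B) \<le> wnumrad \<phi> \<psi> t A + wnumrad \<phi> \<psi> t B"
    unfolding wnumrad_def
  proof (rule numrad_least[OF ne])
    fix x :: 'a assume x: "x \<in> unit_sphere"
    show "cmod (cinner (wop \<phi> \<psi> t (op_add A B) x) x) \<le> numrad (wop \<phi> \<psi> t A) + numrad (wop \<phi> \<psi> t B)"
      using sumle[of x] numrad_upper[OF W[of \<phi> \<psi>] x] numrad_upper[OF Bw[of \<phi> \<psi>] x] by linarith
  qed
  have i14: "wcrawford \<phi> \<psi> t (op_add A B) \<le> wnumrad \<phi> \<psi> t A + wcrawford \<phi> \<psi> t B"
  proof -
    have "crawford (wop \<phi> \<psi> t (op_add A B)) - numrad (wop \<phi> \<psi> t A) \<le> crawford (wop \<phi> \<psi> t B)"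
    proof (rule crawford_greatest[OF ne])
      fix x :: 'a assume x: "x \<in> unit_sphere"
      show "crawford (wop \<phi> \<psi> t (op_add A B)) - numrad (wop \<phi> \<psi> t A) \<le> cmod (cinner (wop \<phi> \<psi> t B x) x)"
        using sumle[of x] numrad_upper[OF W[of \<phi> \<psi>] x] crawford_lower[OF x, of "wop \<phi> \<psi> t (op_add A B)"] by linarith
    qed
    then show ?thesis unfolding wnumrad_def wcrawford_def by simp
  qed
  have T: "bounded_clinear (A \<circ> B)" using bcl_comp[OF A B] .
  have Tw: "\<And>\<phi> \<psi>. bounded_clinear (wop \<phi> \<psi> t (A \<circ> B))" using bcl_wop[OF T] .
  have i15: "wnumrad \<phi> \<psi> t (A \<circ> B) \<le> (\<bar>\<phi> t\<bar> + \<bar>\<psi> t\<bar>) * numrad (A \<circ> B)"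
    unfolding wnumrad_def
  proof (rule numrad_least[OF ne])
    fix x :: 'a assume x: "x \<in> unit_sphere"
    show "cmod (cinner (wop \<phi> \<psi> t (A \<circ> B) x) x) \<le> (\<bar>\<phi> t\<bar> + \<bar>\<psi> t\<bar>) * numrad (A \<circ> B)"
    proof -
      have "(\<bar>\<phi> t\<bar> + \<bar>\<psi> t\<bar>) * cmod (cinner ((A \<circ> B) x) x) \<le> (\<bar>\<phi> t\<bar> + \<bar>\<psi> t\<bar>) * numrad (A \<circ> B)"
        using numrad_upper[OF T x] by (simp add: mult_left_mono)
      then show ?thesis unfolding wop_quad[OF T] by (rule order_trans[OF pw_upper])
    qed
  qed
  have i16: "wcrawford \<phi> \<psi> t (A \<circ> B) \<le> \<bar>\<phi> t\<bar> * crawford (A \<circ> B) + \<bar>\<psi> t\<bar> * numrad (A \<circ> B)"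
  proof -
    have pt: "crawford (wop \<phi> \<psi> t (A \<circ> B)) \<le> \<bar>\<phi> t\<bar> * cmod (cinner ((A \<circ> B) x) x) + \<bar>\<psi> t\<bar> * numrad (A \<circ> B)"
      if x: "x \<in> unit_sphere" for x
    proof -
      have "crawford (wop \<phi> \<psi> t (A \<circ> B)) \<le> cmod (cinner (wop \<phi> \<psi> t (A \<circ> B) x) x)"
        by (rule crawford_lower[OF x])
      also have "\<dots> \<le> \<bar>\<phi> t\<bar> * cmod (cinner ((A \<circ> B) x) x) + \<bar>\<psi> t\<bar> * cmod (cinner ((A \<circ> B) x) x)"
        unfolding wop_quad[OF T] using pw_upper by (simp add: distrib_right)
      also have "\<dots> \<le> \<bar>\<phi> t\<bar> * cmod (cinner ((A \<circ> B) x) x) + \<bar>\<psi> t\<bar> * numrad (A \<circ> B)"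
        using numrad_upper[OF T x] by (simp add: mult_left_mono)
      finally show ?thesis .
    qed
    show ?thesis
    proof (cases "\<phi> t = 0")
      case True
      obtain x :: 'a where x: "x \<in> unit_sphere" using ne by blast
      show ?thesis using pt[OF x] True unfolding wcrawford_def by simp
    next
      case False
      then have fp: "\<bar>\<phi> t\<bar> > 0" by simp
      have "(crawford (wop \<phi> \<psi> t (A \<circ> B)) - \<bar>\<psi> t\<bar> * numrad (A \<circ> B)) / \<bar>\<phi> t\<bar> \<le> crawford (A \<circ> B)"
      proof (rule crawford_greatest[OF ne])
        fix x :: 'a assume x: "x \<in> unit_sphere"
        show "(crawford (wop \<phi> \<psi> t (A \<circ> B)) - \<bar>\<psi> t\<bar> * numrad (A \<circ> B)) / \<bar>\<phi> t\<bar> \<le> cmod (cinner ((A \<circ> B) x) x)"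
          using pt[OF x] fp by (simp add: divide_le_eq mult.commute)
      qed
      then show ?thesis using fp unfolding wcrawford_def by (simp add: divide_le_eq mult.commute)
    qed
  qed
  have i17: "(onorm (wop \<phi> \<psi> t (A \<circ> B)))\<^sup>2 \<le>
       ((\<bar>\<phi> t\<bar>)\<^sup>2 + (\<bar>\<psi> t\<bar>)\<^sup>2) * (onorm (A \<circ> B))\<^sup>2
       + \<bar>\<phi> t * \<psi> t\<bar> * numrad ((A \<circ> B) \<circ> (A \<circ> B))
       + \<bar>\<phi> t * \<psi> t\<bar> * numrad ((adj B \<circ> adj A) \<circ> (adj B \<circ> adj A))"
  proof -
    define S where "S = wop \<phi> \<psi> t (A \<circ> B)"
    have TT: "bounded_clinear ((A \<circ> B) \<circ> (A \<circ> B))" using bcl_comp[OF T T] .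
    have adjTT: "adj ((A \<circ> B) \<circ> (A \<circ> B)) = (adj B \<circ> adj A) \<circ> (adj B \<circ> adj A)"
      by (rule adj_eqI) (simp add: adj_char[OF A] adj_char[OF B])
    have nadj: "numrad ((adj B \<circ> adj A) \<circ> (adj B \<circ> adj A)) = numrad ((A \<circ> B) \<circ> (A \<circ> B))"
      using numrad_adj[OF ne TT] adjTT by simp
    define Bd where "Bd = ((\<phi> t)\<^sup>2 + (\<psi> t)\<^sup>2) * (onorm (A \<circ> B))\<^sup>2 + 2 * \<bar>\<phi> t * \<psi> t\<bar> * numrad ((A \<circ> B) \<circ> (A \<circ> B))"
    have Bd0: "0 \<le> Bd" unfolding Bd_def using numrad_nonneg[OF ne TT] by simp
    have key: "(norm (S x))\<^sup>2 \<le> Bd * (norm x)\<^sup>2" for x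
    proof -
      let ?T = "A \<circ> B"
      define c where "c = cinner (?T (?T x)) x"
      have Sx: "S x = complex_of_real (\<phi> t) *\<^sub>C ?T x + complex_of_real (\<psi> t) *\<^sub>C adj ?T x"
        by (simp add: S_def wop_def op_add_def op_scale_def)
      have c1: "cinner (?T x) (adj ?T x) = c" unfolding c_def by (rule adj_char[OF T, symmetric])
      have c2: "cinner (adj ?T x) (?T x) = cnj c" by (metis c1 cinner_commute)
      have "cinner (S x) (S x) = complex_of_real ((\<phi> t)\<^sup>2 * (norm (?T x))\<^sup>2 + (\<psi> t)\<^sup>2 * (norm (adj ?T x))\<^sup>2)
          + complex_of_real (\<phi> t * \<psi> t) * (c + cnj c)"
        unfolding Sx cinner_add_left ch_cinner_add_right cinner_scaleC_left ch_cinner_scaleC_right c1 c2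
        unfolding ch_cinner_self by (simp add: algebra_simps power2_eq_square)
      then have e: "(norm (S x))\<^sup>2 = (\<phi> t)\<^sup>2 * (norm (?T x))\<^sup>2 + (\<psi> t)\<^sup>2 * (norm (adj ?T x))\<^sup>2 + 2 * (\<phi> t * \<psi> t) * Re c"
        unfolding ch_norm_sq by simp
      have b1: "(norm (?T x))\<^sup>2 \<le> (onorm ?T)\<^sup>2 * (norm x)\<^sup>2"
        using power_mono[OF onorm[OF bcl_bounded_linear[OF T], of x] norm_ge_zero, of 2] by (simp add: power_mult_distrib)
      have b2: "(norm (adj ?T x))\<^sup>2 \<le> (onorm ?T)\<^sup>2 * (norm x)\<^sup>2"
        using power_mono[OF adj_bound[OF T, of x] norm_ge_zero, of 2] by (simp add: power_mult_distrib)
      have b3: "\<phi> t * \<psi> t * Re c \<le> \<bar>\<phi> t * \<psi> t\<bar> * (numrad (?T \<circ> ?T) * (norm x)\<^sup>2)"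
      proof -
        have "\<phi> t * \<psi> t * Re c \<le> \<bar>\<phi> t * \<psi> t\<bar> * cmod c"
          by (rule pw_b3)
        also have "cmod c \<le> numrad (?T \<circ> ?T) * (norm x)\<^sup>2"
          using quad_scaled[OF TT, of x] by (simp add: c_def)
        finally show ?thesis by (simp add: mult_left_mono)
      qed
      have "(\<phi> t)\<^sup>2 * (norm (?T x))\<^sup>2 \<le> (\<phi> t)\<^sup>2 * ((onorm ?T)\<^sup>2 * (norm x)\<^sup>2)" using b1 by (simp add: mult_left_mono)
      moreover have "(\<psi> t)\<^sup>2 * (norm (adj ?T x))\<^sup>2 \<le> (\<psi> t)\<^sup>2 * ((onorm ?T)\<^sup>2 * (norm x)\<^sup>2)" using b2 by (simp add: mult_left_mono)
      moreover have "Bd * (norm x)\<^sup>2 = (\<phi> t)\<^sup>2 * ((onorm ?T)\<^sup>2 * (norm x)\<^sup>2) + (\<psi> t)\<^sup>2 * ((onorm ?T)\<^sup>2 * (norm x)\<^sup>2)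
          + 2 * (\<bar>\<phi> t * \<psi> t\<bar> * (numrad (?T \<circ> ?T) * (norm x)\<^sup>2))"
        by (simp add: Bd_def algebra_simps)
      ultimately show ?thesis unfolding e using b3 by linarith
    qed
    have "onorm S \<le> sqrt Bd"
    proof (rule onorm_bound)
      show "0 \<le> sqrt Bd" using Bd0 by simp
      fix x
      have "norm (S x) = sqrt ((norm (S x))\<^sup>2)" by simp
      also have "\<dots> \<le> sqrt (Bd * (norm x)\<^sup>2)" using key[of x] by (rule real_sqrt_le_mono)
      also have "\<dots> = sqrt Bd * norm x" by (simp add: real_sqrt_mult)
      finally show "norm (S x) \<le> sqrt Bd * norm x" .
    qed
    then have "(onorm S)\<^sup>2 \<le> (sqrt Bd)\<^sup>2"
      using onorm_pos_le[OF bcl_bounded_linear[OF Tw[of \<phi> \<psi>]]] unfolding S_def by (simp add: power_mono)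
    then have "(onorm S)\<^sup>2 \<le> Bd" using Bd0 by simp
    then show ?thesis unfolding S_def Bd_def nadj by simp
  qed
  have i18: "wnumrad (\<lambda>s. \<phi>1 s + \<phi>2 s) (\<lambda>s. \<psi>1 s + \<psi>2 s) t A \<le> wnumrad \<phi>1 \<psi>1 t A + wnumrad \<phi>2 \<psi>2 t A"
    unfolding wnumrad_def
  proof (rule numrad_least[OF ne])
    fix x :: 'a assume x: "x \<in> unit_sphere"
    have "cinner (wop (\<lambda>s. \<phi>1 s + \<phi>2 s) (\<lambda>s. \<psi>1 s + \<psi>2 s) t A x) x = cinner (wop \<phi>1 \<psi>1 t A x) x + cinner (wop \<phi>2 \<psi>2 t A x) x"
      by (simp add: WQ algebra_simps)
    then have "cmod (cinner (wop (\<lambda>s. \<phi>1 s + \<phi>2 s) (\<lambda>s. \<psi>1 s + \<psi>2 s) t A x) x) \<le> cmod (cinner (wop \<phi>1 \<psi>1 t A x) x) + cmod (cinner (wop \<phi>2 \<psi>2 t A x) x)"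
      by (metis norm_triangle_ineq)
    then show "cmod (cinner (wop (\<lambda>s. \<phi>1 s + \<phi>2 s) (\<lambda>s. \<psi>1 s + \<psi>2 s) t A x) x) \<le> numrad (wop \<phi>1 \<psi>1 t A) + numrad (wop \<phi>2 \<psi>2 t A)"
      using numrad_upper[OF W[of \<phi>1 \<psi>1] x] numrad_upper[OF W[of \<phi>2 \<psi>2] x] by linarith
  qed
  have i19: "wcrawford \<phi> \<psi> t A \<ge> min \<bar>\<phi> t + \<psi> t\<bar> \<bar>\<phi> t - \<psi> t\<bar> * crawford A"
    unfolding wcrawford_def
  proof (rule crawford_greatest[OF ne])
    fix x :: 'a assume x: "x \<in> unit_sphere"
    have "min \<bar>\<phi> t + \<psi> t\<bar> \<bar>\<phi> t - \<psi> t\<bar> * crawford A \<le> min \<bar>\<phi> t + \<psi> t\<bar> \<bar>\<phi> t - \<psi> t\<bar> * cmod (cinner (A x) x)"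
      using crawford_lower[OF x, of A] by (simp add: mult_left_mono)
    also have "\<dots> \<le> cmod (cinner (wop \<phi> \<psi> t A x) x)" unfolding WQ by (rule pw_min)
    finally show "min \<bar>\<phi> t + \<psi> t\<bar> \<bar>\<phi> t - \<psi> t\<bar> * crawford A \<le> cmod (cinner (wop \<phi> \<psi> t A x) x)" .
  qed
  show ?thesis
    by (rule conjI[OF i1 conjI[OF i2 conjI[OF i3 conjI[OF i4 conjI[OF i5 conjI[OF i6 conjI[OF i7
        conjI[OF i8 conjI[OF i9 conjI[OF i10 conjI[OF i11 conjI[OF i12 conjI[OF i13 conjI[OF i14
        conjI[OF i15 conjI[OF i16 conjI[OF i17 conjI[OF i18 i19]]]]]]]]]]]]]]]]]])
qed

end
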